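(* Assume the setting of the context and suppose that condition (A1)(d) holds. Then for any compact interval $I\subset(0,\infty)$, $x\in F$ and $r>0$, \[\lim_{n\rightarrow\infty}\mathbf{P}_{\rho}^{G^n}\left(X^n_{\lfloor \gamma(n)t\rfloor+i}\in B_E(x,r)\right)=\int_{B_F(x,r)}q_t(y)\nu(dy)\] uniformly for $t\in I$, $i\in\{0,1\}$.
   Context: Let $(E,d_E)$ be a metric space and $F\subseteq E$ such that $F\cap\overline{B}_E(x,r)$ is compact for all $x\in E$, $r>0$ ($\overline{B}_E$, $B_E$ closed and open balls in $E$). Let $d_F:=d_E|_{F\times F}$, $B_F(x,r)$ the open ball in $(F,d_F)$, $\rho\in F$, $\nu$ a Radon measure of full support on $(F,d_F)$ (extended to $E$ by $\nu(A):=\nu(A\cap F)$), and $(q_t(x))_{x\in F,t>0}$ jointly continuous in $(t,x)$ with $q_t\ge0$, $\int_Fq_t\,d\nu=1$. For a locally finite connected graph $G$ with symmetric edge weights $\mu^G_{xy}$ ($>0$ iff $\{x,y\}$ is an edge), the discrete time simple random walk $X^G$ has transition probabilities $P_G(x,y)=\mu^G_{xy}/\sum_z\mu^G_{xz}$ and law $\mathbf{P}^G_x$ from $x$. Let $(G^n)_{n\ge1}$ be locally finite connected graphs with at least two vertices, $V(G^n)\subseteq E$, distinguished vertex $\rho$; write $X^n:=X^{G^n}$. Let $(\gamma(n))$ be a non-negative sequence diverging to $\infty$. Condition (A1)(d): for every compact interval $I\subset(0,\infty)$, $x\in F$, $r>0$, $\lim_n\mathbf{P}^{G^n}_\rho(X^n_{\lfloor\gamma(n)t\rfloor}\in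 B_E(x,r))=\int_{B_F(x,r)}q_t(y)\nu(dy)$ uniformly for $t\in I$. *)

theory Defs
  imports "HOL-Probability.Probability"
begin

definition weighted_graph :: "'a set \<Rightarrow> ('a \<Rightarrow> 'a \<Rightarrow> real) \<Rightarrow> bool" where
  "weighted_graph V mu \<longleftrightarrow>
     (\<forall>x y. mu x y = mu y x) \<and> (\<forall>x y. 0 \<le> mu x y) \<and>
     (\<forall>x y. 0 < mu x y \<longrightarrow> x \<in> V \<and> y \<in> V) \<and>
     (\<forall>x\<in>V. finite {y. 0 < mu x y}) \<and>
     (\<forall>x\<in>V. \<forall>y\<in>V. (x, y) \<in> {(a, b). 0 < mu a b}\<^sup>*) \<and>
     (\<exists>x\<in>V. \<exists>y\<in>V. x \<noteq> y)"

definition rw_step :: "('a \<Rightarrow> 'a \<Rightarrow> real) \<Rightarrow> 'a \<Rightarrow> 'a pmf" where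
  "rw_step mu x = embed_pmf (\<lambda>y. mu x y / (\<Sum>z\<in>{z. 0 < mu x z}. mu x z))"

text \<open>Law of X_k under P_x (discrete time simple random walk started at x).\<close>
fun rw_dist :: "('a \<Rightarrow> 'a \<Rightarrow> real) \<Rightarrow> 'a \<Rightarrow> nat \<Rightarrow> 'a pmf" where
  "rw_dist mu x 0 = return_pmf x"
| "rw_dist mu x (Suc k) = bind_pmf (rw_dist mu x k) (rw_step mu)"

end

theory Submission
  imports Defs
begin

theorem lemma2p1:
  fixes F :: "'a::metric_space set"
    and nu :: "'a measure"
    and q :: "real \<Rightarrow> 'a \<Rightarrow> real"
    and rho :: 'a
    and V :: "nat \<Rightarrow> 'a set"
    and mu :: "nat \<Rightarrow> 'a \<Rightarrow> 'a \<Rightarrow> real"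
    and \<gamma> :: "nat \<Rightarrow> real"
  assumes F_cpt: "\<And>x r. r > 0 \<Longrightarrow> compact (F \<inter> cball x r)"
    and rho_F: "rho \<in> F"
    and nu_sets: "sets nu = sets borel"
    and nu_ext: "\<And>A. A \<in> sets nu \<Longrightarrow> emeasure nu A = emeasure nu (A \<inter> F)"
    and nu_locfin: "\<And>K. compact K \<Longrightarrow> K \<subseteq> F \<Longrightarrow> emeasure nu K < \<infinity>"
    and nu_inner: "\<And>A. A \<in> sets nu \<Longrightarrow>
          emeasure nu A = (SUP K \<in> {K. compact K \<and> K \<subseteq> A}. emeasure nu K)"
    and nu_supp: "\<And>x r. x \<in> F \<Longrightarrow> r > 0 \<Longrightarrow> emeasure nu (ball x r \<inter> F) > 0"
    and q_cont: "continuous_on ({0<..} \<times> F) (\<lambda>(t, x). q t x)"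
    and q_nonneg: "\<And>t x. t > 0 \<Longrightarrow> x \<in> F \<Longrightarrow> 0 \<le> q t x"
    and q_int: "\<And>t. t > 0 \<Longrightarrow> (LINT y:F|nu. q t y) = 1"
    and graphs: "\<And>n. n \<ge> 1 \<Longrightarrow> weighted_graph (V n) (mu n)"
    and rho_V: "\<And>n. n \<ge> 1 \<Longrightarrow> rho \<in> V n"
    and gamma_nonneg: "\<And>n. 0 \<le> \<gamma> n"
    and gamma_lim: "filterlim \<gamma> at_top sequentially"
    and A1d: "\<And>a b x r. 0 < a \<Longrightarrow> a \<le> b \<Longrightarrow> x \<in> F \<Longrightarrow> r > 0 \<Longrightarrow>
          uniform_limit {a..b}
            (\<lambda>n t. measure_pmf.prob (rw_dist (mu n) rho (nat \<lfloor>\<gamma> n * t\<rfloor>)) (ball x r))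
            (\<lambda>t. LINT y:(ball x r \<inter> F)|nu. q t y) sequentially"
  shows "\<And>a b x r. 0 < a \<Longrightarrow> a \<le> b \<Longrightarrow> x \<in> F \<Longrightarrow> r > 0 \<Longrightarrow>
          uniform_limit ({a..b} \<times> {0, 1})
            (\<lambda>n (t, i). measure_pmf.prob (rw_dist (mu n) rho (nat \<lfloor>\<gamma> n * t\<rfloor> + i)) (ball x r))
            (\<lambda>(t, i). LINT y:(ball x r \<inter> F)|nu. q t y) sequentially"
proof -
  fix a b :: real and x :: 'a and r :: real assume ab: "0 < a" "a \<le> b" and xF: "x \<in> F" and r: "r > 0"
  define B where "B = ball x r \<inter> F"
  define K where "K = F \<inter> cball x r"
  define g where "g t = (LINT y:B|nu. q t y)" for t
  have Kc: "compact K" using F_cpt r unfolding K_def by auto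
  have BK: "B \<subseteq> K" unfolding B_def K_def by auto
  have KF: "K \<subseteq> F" unfolding K_def by auto
  have BeqK: "B = ball x r \<inter> K" unfolding B_def K_def by auto
  have Bb: "B \<in> sets borel" unfolding BeqK
    using Kc by (intro sets.Int borel_open borel_closed compact_imp_closed) auto
  have Bnu: "B \<in> sets nu" using nu_sets Bb by simp
  have Knu: "K \<in> sets nu" using nu_sets Kc compact_imp_closed borel_closed by auto
  have Bfin: "emeasure nu B < \<infinity>"
    using emeasure_mono[OF BK Knu] nu_locfin[OF Kc KF] by (simp add: order_le_less_trans)
  have qc: "continuous_on F (q s)" if "s > 0" for s
  proof -
    have "continuous_on F ((\<lambda>(t, x). q t x) \<circ> (\<lambda>y. (s, y)))"
      by (rule continuous_on_compose[OF continuous_on_Pair[OF continuous_on_const continuous_on_id]])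
         (rule continuous_on_subset[OF q_cont], use that in auto)
    then show ?thesis by (simp add: o_def)
  qed
  have const_int: "set_integrable nu B (\<lambda>_. c::real)" for c
    unfolding set_integrable_def
    by (rule integrableI_bounded_set[where A=B and B="\<bar>c\<bar>"]) (use Bnu Bfin in \<open>auto simp: indicator_def\<close>)
  have int: "set_integrable nu B (q s)" if "s > 0" for s
  proof -
    have "compact (q s ` K)"
      using compact_continuous_image[OF continuous_on_subset[OF qc[OF that] KF] Kc] .
    then obtain M where M: "\<And>y. y \<in> K \<Longrightarrow> \<bar>q s y\<bar> \<le> M"
      using compact_imp_bounded bounded_iff by (metis imageI real_norm_def)
    have meas: "(\<lambda>y. indicator B y *\<^sub>R q s y) \<in> borel_measurable nu"
      using borel_measurable_continuous_on_indicator[OF Bb continuous_on_subset[OF qc[OF that]]]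
        measurable_cong_sets[OF nu_sets refl] unfolding B_def by auto
    show ?thesis
      unfolding set_integrable_def
      by (rule integrableI_bounded_set[where A=B and B=M])
         (use Bnu Bfin meas M BK in \<open>auto simp: indicator_def\<close>)
  qed
  have ucont: "\<exists>d>0. \<forall>s\<in>{a..b+1}. \<forall>t\<in>{a..b+1}. \<forall>y\<in>K. \<bar>s - t\<bar> < d \<longrightarrow> \<bar>q s y - q t y\<bar> < \<epsilon>"
    if eps: "\<epsilon> > 0" for \<epsilon>
  proof -
    have "uniformly_continuous_on ({a..b+1} \<times> K) (\<lambda>(t, x). q t x)"
      by (rule compact_uniformly_continuous[OF continuous_on_subset[OF q_cont]])
         (use ab KF Kc in \<open>auto intro: compact_Times\<close>)
    then obtain d where d: "d > 0" and hd: "\<And>u v. u \<in> {a..b+1} \<times> K \<Longrightarrow> v \<in> {a..b+1} \<times> K \<Longrightarrow>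
        dist v u < d \<Longrightarrow> dist ((\<lambda>(t, x). q t x) v) ((\<lambda>(t, x). q t x) u) < \<epsilon>"
      unfolding uniformly_continuous_on_def using eps by blast
    show ?thesis
    proof (intro exI[of _ d] conjI ballI impI d)
      fix s t y assume st: "s \<in> {a..b+1}" "t \<in> {a..b+1}" "y \<in> K" "\<bar>s - t\<bar> < d"
      have "dist (s, y) (t, y) < d" using st by (simp add: dist_Pair_Pair dist_real_def)
      from hd[of "(t, y)" "(s, y)", OF _ _ this] st show "\<bar>q s y - q t y\<bar> < \<epsilon>"
        by (simp add: dist_real_def)
    qed
  qed
  have gdiff: "\<bar>g s - g t\<bar> \<le> \<epsilon> * measure nu B"
    if st: "s \<in> {a..b+1}" "t \<in> {a..b+1}" and hq: "\<forall>y\<in>K. \<bar>q s y - q t y\<bar> < \<epsilon>" for s t \<epsilon>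
  proof -
    have s0: "s > 0" and t0: "t > 0" using st ab by auto
    have "g s - g t = (LINT y:B|nu. q s y - q t y)"
      unfolding g_def by (rule set_integral_diff(2)[symmetric, OF int[OF s0] int[OF t0]])
    also have "\<bar>\<dots>\<bar> \<le> (LINT y:B|nu. norm (q s y - q t y))"
      using set_integral_norm_bound[OF set_integral_diff(1)[OF int[OF s0] int[OF t0]]] by simp
    also have "\<dots> \<le> (LINT y:B|nu. \<epsilon>)"
      by (rule set_integral_mono[OF _ const_int])
         (use set_integral_diff(1)[OF int[OF s0] int[OF t0]] hq BK in
           \<open>auto intro: set_integrable_abs less_imp_le\<close>)
    also have "\<dots> = \<epsilon> * measure nu B"
      using Bfin Bnu by (simp add: set_lebesgue_integral_def)
    finally show ?thesis by simp
  qed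
  show "uniform_limit ({a..b} \<times> {0, 1})
            (\<lambda>n (t, i). measure_pmf.prob (rw_dist (mu n) rho (nat \<lfloor>\<gamma> n * t\<rfloor> + i)) (ball x r))
            (\<lambda>(t, i). LINT y:(ball x r \<inter> F)|nu. q t y) sequentially"
    unfolding uniform_limit_iff
  proof (intro allI impI)
    fix e :: real assume e: "e > 0"
    define m where "m = measure nu B"
    have m0: "m \<ge> 0" unfolding m_def by simp
    have "e / (2 * (m + 1)) > 0" using e m0 by simp
    from ucont[OF this] obtain d where d: "d > 0" and hd: "\<And>s t y. s \<in> {a..b+1} \<Longrightarrow> t \<in> {a..b+1} \<Longrightarrow>
      y \<in> K \<Longrightarrow> \<bar>s - t\<bar> < d \<Longrightarrow> \<bar>q s y - q t y\<bar> < e / (2 * (m + 1))" by blast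
    have ev1: "\<forall>\<^sub>F n in sequentially. \<forall>t\<in>{a..b+1}.
        dist (measure_pmf.prob (rw_dist (mu n) rho (nat \<lfloor>\<gamma> n * t\<rfloor>)) (ball x r)) (g t) < e/2"
    proof -
      have "e/2 > 0" using e by simp
      moreover have "a \<le> b + 1" using ab by simp
      ultimately show ?thesis
        using A1d[of a "b+1" x r] ab xF r unfolding uniform_limit_iff g_def B_def by blast
    qed
    have ev2: "\<forall>\<^sub>F n in sequentially. max 1 (1/d) < \<gamma> n"
      using gamma_lim unfolding filterlim_at_top_dense by blast
    show "\<forall>\<^sub>F n in sequentially. \<forall>p\<in>{a..b} \<times> {0, 1}.
        dist ((\<lambda>(t, i). measure_pmf.prob (rw_dist (mu n) rho (nat \<lfloor>\<gamma> n * t\<rfloor> + i)) (ball x r)) p)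
             ((\<lambda>(t, i). LINT y:(ball x r \<inter> F)|nu. q t y) p) < e"
      using ev1 ev2
    proof eventually_elim
      case (elim n)
      show ?case
      proof (intro ballI)
        fix p assume p: "p \<in> {a..b} \<times> {0::nat, 1}"
        then obtain t i where pti: "p = (t, i)" and t: "t \<in> {a..b}" and i: "i = 0 \<or> i = 1" by auto
        have gt: "g t = (LINT y:(ball x r \<inter> F)|nu. q t y)" unfolding g_def B_def ..
        show "dist ((\<lambda>(t, i). measure_pmf.prob (rw_dist (mu n) rho (nat \<lfloor>\<gamma> n * t\<rfloor> + i)) (ball x r)) p)
             ((\<lambda>(t, i). LINT y:(ball x r \<inter> F)|nu. q t y) p) < e"
        proof (cases "i = 0")
          case True
          have "dist (measure_pmf.prob (rw_dist (mu n) rho (nat \<lfloor>\<gamma> n * t\<rfloor>)) (ball x r)) (g t) < e/2"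
            using elim(1) t by auto
          then show ?thesis using True pti gt e by simp
        next
          case False
          then have i1: "i = 1" using i by simp
          have gpos: "\<gamma> n > 1" "\<gamma> n > 1/d" using elim(2) by auto
          define t' where "t' = t + 1 / \<gamma> n"
          have "1 < \<gamma> n * d" using gpos(2) d by (simp add: pos_divide_less_eq)
          then have small: "1 / \<gamma> n < d" using gpos(1) by (simp add: divide_less_eq mult.commute)
          have small1: "1 / \<gamma> n \<le> 1" using gpos by simp
          have nn: "1 / \<gamma> n \<ge> 0" using gpos by simp
          have t'I: "t' \<in> {a..b+1}" using t small1 nn unfolding t'_def atLeastAtMost_iff by linarith
          have tI: "t \<in> {a..b+1}" using t by auto
          have "\<gamma> n * t' = \<gamma> n * t + 1" unfolding t'_def using gpos by (simp add: algebra_simps)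
          moreover have "\<gamma> n * t \<ge> 0" using gpos t ab by simp
          ultimately have idx: "nat \<lfloor>\<gamma> n * t\<rfloor> + 1 = nat \<lfloor>\<gamma> n * t'\<rfloor>"
            by (simp add: nat_add_distrib)
          have d1: "dist (measure_pmf.prob (rw_dist (mu n) rho (nat \<lfloor>\<gamma> n * t'\<rfloor>)) (ball x r)) (g t') < e/2"
            using elim(1) t'I by auto
          have "\<forall>y\<in>K. \<bar>q t' y - q t y\<bar> < e / (2 * (m + 1))"
          proof
            fix y assume "y \<in> K"
            moreover have "\<bar>t' - t\<bar> < d" using small nn unfolding t'_def by simp
            ultimately show "\<bar>q t' y - q t y\<bar> < e / (2 * (m + 1))" using hd[OF t'I tI] by blast
          qed
          from gdiff[OF t'I tI this] have d2: "\<bar>g t' - g t\<bar> \<le> e / (2 * (m + 1)) * m"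
            unfolding m_def .
          have "e / (2 * (m + 1)) * m \<le> e / 2"
            using e m0 by (simp add: field_simps)
          with d1 d2 have "dist (measure_pmf.prob (rw_dist (mu n) rho (nat \<lfloor>\<gamma> n * t'\<rfloor>)) (ball x r)) (g t) < e"
            unfolding dist_real_def by linarith
          then show ?thesis using i1 pti gt idx by simp
        qed
      qed
    qed
  qed
qed

end
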